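(* Let $a>1$ and $C_j(n,a)=\binom{n}{j}\left(\frac{1+a}{2}\right)^{n-j}\left(\frac{1-a}{2}\right)^j$. Then for every $\lambda\in\mathbb{R}$, $$\lim_{n\to\infty}\sum_{j=0}^nC_j(n,a)e^{\lambda(1-2j/n)-\frac{(1-2j/n)^2}{2}}=e^{-\frac{a^2}{2}+a\lambda}.$$ In particular $\lim_{n\to\infty}\sum_{j=0}^nC_j(n,a)e^{-\frac{(1-2j/n)^2}{2}}=e^{-a^2/2}$ and $\lim_{n\to\infty}\sum_{j=0}^nC_j(n,a)e^{\frac a2(1-2j/n)-\frac{(1-2j/n)^2}{2}}=1$. *)

theory Defs
  imports "HOL-Analysis.Analysis"
begin

definition Cj :: "nat \<Rightarrow> nat \<Rightarrow> real \<Rightarrow> real" where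
  "Cj j n a = real (n choose j) * ((1 + a) / 2) ^ (n - j) * ((1 - a) / 2) ^ j"

end

theory Submission
  imports Defs "HOL-Analysis.Analysis"
begin

unbundle no vec_syntax
unbundle fps_syntax

definition fdom :: "real fps \<Rightarrow> real fps \<Rightarrow> bool" where
  "fdom P Q \<longleftrightarrow> (\<forall>k. \<bar>P $ k\<bar> \<le> Q $ k)"

lemma fdom_nonneg: "fdom P Q \<Longrightarrow> 0 \<le> Q $ k"
  unfolding fdom_def by (meson abs_ge_zero order_trans)

lemma fdom_mult:
  assumes "fdom P Q" "fdom P' Q'" shows "fdom (P * P') (Q * Q')"
  unfolding fdom_def
proof
  fix k
  have "\<bar>(P*P') $ k\<bar> \<le> (\<Sum>i=0..k. \<bar>P$i * P'$(k - i)\<bar>)"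
    unfolding fps_mult_nth by (rule sum_abs)
  also have "\<dots> \<le> (\<Sum>i=0..k. Q$i * Q'$(k - i))"
    apply (rule sum_mono)
    unfolding abs_mult
    apply (rule mult_mono)
    using assms fdom_nonneg[OF assms(1)] unfolding fdom_def by auto
  finally show "\<bar>(P*P') $ k\<bar> \<le> (Q*Q') $ k" by (simp add: fps_mult_nth)
qed

lemma fdom_power: "fdom P Q \<Longrightarrow> fdom (P ^ n) (Q ^ n)"
proof (induction n)
  case 0 then show ?case by (simp add: fdom_def)
next
  case (Suc n) then show ?case using fdom_mult by simp
qed

lemma fdom_add: "fdom P Q \<Longrightarrow> fdom P' Q' \<Longrightarrow> fdom (P + P') (Q + Q')"
  unfolding fdom_def
proof (intro allI)
  fix k assume a: "\<forall>k. \<bar>P $ k\<bar> \<le> Q $ k" "\<forall>k. \<bar>P' $ k\<bar> \<le> Q' $ k"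
  have "\<bar>P $ k + P' $ k\<bar> \<le> \<bar>P $ k\<bar> + \<bar>P' $ k\<bar>" by (rule abs_triangle_ineq)
  then show "\<bar>(P + P') $ k\<bar> \<le> (Q + Q') $ k" using a[rule_format, of k] by simp
qed

lemma fdom_sum: "(\<And>i. i \<in> S \<Longrightarrow> fdom (P i) (Q i)) \<Longrightarrow> fdom (sum P S) (sum Q S)"
  unfolding fdom_def fps_sum_nth
proof (intro allI)
  fix k assume a: "\<And>i. i \<in> S \<Longrightarrow> \<forall>k. \<bar>P i $ k\<bar> \<le> Q i $ k"
  have "\<bar>\<Sum>i\<in>S. P i $ k\<bar> \<le> (\<Sum>i\<in>S. \<bar>P i $ k\<bar>)" by (rule sum_abs)
  also have "\<dots> \<le> (\<Sum>i\<in>S. Q i $ k)" by (rule sum_mono) (use a in blast)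
  finally show "\<bar>\<Sum>i\<in>S. P i $ k\<bar> \<le> (\<Sum>i\<in>S. Q i $ k)" .
qed

lemma Apow:
  fixes a :: real and n :: nat
  assumes "n \<ge> 1"
  defines "A \<equiv> fps_const ((1+a)/2) * fps_exp (1/n) + fps_const ((1-a)/2) * fps_exp (-1/n)"
  shows "A ^ n = (\<Sum>j\<le>n. fps_const (Cj j n a) * fps_exp (1 - 2 * real j / real n))"
proof -
  have "A ^ n = (fps_const ((1-a)/2) * fps_exp (-1/n) + fps_const ((1+a)/2) * fps_exp (1/n)) ^ n"
    unfolding A_def by (simp add: add.commute)
  also have "\<dots> = (\<Sum>j\<le>n. of_nat (n choose j) * (fps_const ((1-a)/2) * fps_exp (-1/n)) ^ j *
       (fps_const ((1+a)/2) * fps_exp (1/n)) ^ (n - j))"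
    by (rule binomial_ring)
  also have "\<dots> = (\<Sum>j\<le>n. fps_const (Cj j n a) * fps_exp (1 - 2 * real j / real n))"
  proof (rule sum.cong[OF refl])
    fix j assume "j \<in> {..n}"
    hence jn: "j \<le> n" by simp
    have e: "real j * (-1 / real n) + real (n - j) * (1 / real n) = 1 - 2 * real j / real n"
      using assms jn by (simp add: of_nat_diff field_simps)
    have "of_nat (n choose j) * (fps_const ((1-a)/2) * fps_exp (-1/n)) ^ j *
       (fps_const ((1+a)/2) * fps_exp (1/n)) ^ (n - j)
      = fps_const (real (n choose j)) * (fps_const (((1-a)/2)^j) * fps_exp (real j * (-1/n))) *
       (fps_const (((1+a)/2)^(n-j)) * fps_exp (real (n-j) * (1/n)))"
      by (simp only: power_mult_distrib fps_exp_power_mult fps_const_power fps_of_nat)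
    also have "\<dots> = fps_const (Cj j n a) * (fps_exp (real j * (-1/n)) * fps_exp (real (n-j) * (1/n)))"
      unfolding Cj_def fps_const_mult[symmetric] by (simp only: ac_simps)
    also have "\<dots> = fps_const (Cj j n a) * fps_exp (1 - 2 * real j / real n)"
      by (simp only: fps_exp_add_mult[symmetric] e)
    finally show "of_nat (n choose j) * (fps_const ((1-a)/2) * fps_exp (-1/n)) ^ j *
       (fps_const ((1+a)/2) * fps_exp (1/n)) ^ (n - j) = fps_const (Cj j n a) * fps_exp (1 - 2 * real j / real n)" .
  qed
  finally show ?thesis .
qed

definition mom :: "real \<Rightarrow> nat \<Rightarrow> nat \<Rightarrow> real" where
  "mom a k n = (\<Sum>j=0..n. Cj j n a * (1 - 2 * real j / real n) ^ k)"

definition Aser :: "real \<Rightarrow> nat \<Rightarrow> real fps" where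
  "Aser a n = fps_const ((1+a)/2) * fps_exp (1/n) + fps_const ((1-a)/2) * fps_exp (-1/n)"

lemma mom_coeff:
  assumes "n \<ge> 1"
  shows "(Aser a n ^ n) $ k = mom a k n / fact k"
proof -
  have "(Aser a n ^ n) $ k = (\<Sum>j\<le>n. Cj j n a * ((1 - 2 * real j / real n) ^ k / fact k))"
    unfolding Aser_def Apow[OF assms] fps_sum_nth by simp
  also have "\<dots> = mom a k n / fact k"
    unfolding mom_def sum_divide_distrib atLeast0AtMost by simp
  finally show ?thesis .
qed

lemma A_nth: "Aser a n $ k = ((1+a)/2 + (1-a)/2 * (-1)^k) * (1/real n)^k / fact k"
proof -
  have "Aser a n $ k = (1+a)/2 * ((1/real n)^k / fact k) + (1-a)/2 * ((-1/real n)^k / fact k)"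
    unfolding Aser_def by simp
  also have "(-1/real n)^k = (-1)^k * (1/real n)^k"
    by (metis mult_minus_left power_mult_distrib times_divide_eq_right mult_1_left minus_divide_left)
  finally show ?thesis by (simp add: algebra_simps add_divide_distrib)
qed

lemma A_dom:
  assumes "a > 1" "n \<ge> 1"
  shows "fdom (Aser a n) (fps_exp (a/n))"
  unfolding fdom_def
proof
  fix k
  have c: "\<bar>(1+a)/2 + (1-a)/2 * (-1)^k\<bar> \<le> a^k"
  proof (cases k)
    case 0
    have "(1+a)/2 + (1-a)/2 = (1::real)" by (simp add: add_divide_distrib[symmetric])
    then show ?thesis using 0 by simp
  next
    case (Suc k')
    have "\<bar>(1+a)/2 + (1-a)/2 * (-1)^k\<bar> \<le> a"
    proof -
      have "(-1::real)^k = 1 \<or> (-1::real)^k = -1" by (cases "even k") auto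
      moreover have "(1+a)/2 + (1-a)/2 = (1::real)" "(1+a)/2 + (a-1)/2 = a"
        by (simp_all add: add_divide_distrib[symmetric])
      ultimately show ?thesis using assms by auto
    qed
    also have "a \<le> a^k" using assms Suc power_increasing[of 1 k a] by simp
    finally show ?thesis .
  qed
  have "\<bar>Aser a n $ k\<bar> = \<bar>(1+a)/2 + (1-a)/2 * (-1)^k\<bar> * (1/real n)^k / fact k"
    unfolding A_nth by (simp add: abs_mult)
  also have "\<dots> \<le> a^k * (1/real n)^k / fact k"
    by (intro divide_right_mono mult_right_mono c) auto
  also have "\<dots> = fps_exp (a/n) $ k" by (simp add: power_divide)
  finally show "\<bar>Aser a n $ k\<bar> \<le> fps_exp (a/n) $ k" .
qed

lemma mom_bound:
  assumes "a > 1" "n \<ge> 1"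
  shows "\<bar>mom a k n\<bar> \<le> a^k"
proof -
  have "fdom (Aser a n ^ n) (fps_exp (a/n) ^ n)"
    by (rule fdom_power[OF A_dom[OF assms]])
  then have "\<bar>(Aser a n ^ n) $ k\<bar> \<le> (fps_exp (a/n) ^ n) $ k" unfolding fdom_def by blast
  also have "fps_exp (a/n) ^ n = fps_exp a"
  proof -
    have "real n * (a / real n) = a" using assms by simp
    then show ?thesis by (simp only: fps_exp_power_mult)
  qed
  finally have "\<bar>(Aser a n ^ n) $ k\<bar> \<le> fps_exp a $ k" .
  then have "\<bar>mom a k n / fact k\<bar> \<le> a^k / fact k"
    by (simp only: mom_coeff[OF assms(2)] fps_exp_nth of_nat_fact)
  then have "\<bar>mom a k n\<bar> / fact k \<le> a^k / fact k"
    by (simp add: abs_divide)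
  then show ?thesis by (subst (asm) divide_le_cancel) auto
qed
lemma fdom_exp: "c \<ge> 0 \<Longrightarrow> fdom (fps_exp c) (fps_exp c)"
  unfolding fdom_def by simp

lemma AmE_dom:
  assumes "a > 1" "n \<ge> 1"
  shows "fdom (Aser a n - fps_exp (a/n)) (fps_const (2*(a/n)^2) * (fps_X^2 * fps_exp (a/n)))"
  unfolding fdom_def
proof
  fix k
  have pq: "(1+a)/2 + (1-a)/2 = (1::real)" "(1+a)/2 - (1-a)/2 = a"
    by (simp_all add: add_divide_distrib[symmetric] diff_divide_distrib[symmetric])
  consider "k = 0" | "k = 1" | "k \<ge> (2::nat)" by linarith
  then show "\<bar>(Aser a n - fps_exp (a/n)) $ k\<bar> \<le> (fps_const (2*(a/n)^2) * (fps_X^2 * fps_exp (a/n))) $ k"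
  proof cases
    case 1 then show ?thesis using pq by (simp add: A_nth)
  next
    case 2
    have "Aser a n $ 1 = a / n" unfolding A_nth using pq by simp
    then show ?thesis using 2 assms by (simp add: fps_X_power_mult_nth)
  next
    case 3
    have E: "fps_exp (a/n) $ k \<ge> 0" using assms by simp
    have "\<bar>(Aser a n - fps_exp (a/n)) $ k\<bar> \<le> \<bar>Aser a n $ k\<bar> + \<bar>fps_exp (a/n) $ k\<bar>"
      by (simp only: fps_sub_nth abs_triangle_ineq4)
    also have "\<dots> \<le> 2 * fps_exp (a/n) $ k"
    proof -
      have h: "\<bar>Aser a n $ k\<bar> \<le> fps_exp (a/n) $ k"
        using A_dom[OF assms] unfolding fdom_def by blast
      have "\<bar>fps_exp (a/n) $ k\<bar> = fps_exp (a/n) $ k" using E by (rule abs_of_nonneg)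
      then show ?thesis using h by linarith
    qed
    also have "\<dots> = 2 * ((a/n)^2 * (a/n)^(k-2) / fact k)"
    proof -
      have "(a/n)^k = (a/n)^2 * (a/n)^(k-2)" using 3
        by (metis le_add_diff_inverse power_add)
      then show ?thesis by simp
    qed
    also have "\<dots> \<le> 2 * ((a/n)^2 * (a/n)^(k-2) / fact (k-2))"
      using assms by (intro mult_left_mono divide_left_mono fact_mono) auto
    also have "\<dots> = (fps_const (2*(a/n)^2) * (fps_X^2 * fps_exp (a/n))) $ k"
      using 3 by (simp add: fps_X_power_mult_nth)
    finally show ?thesis .
  qed
qed

lemma diff_dom:
  assumes "a > 1" "n \<ge> 1"
  shows "fdom (Aser a n ^ n - fps_exp (a/n) ^ n)
           (fps_const (2*(a/n)^2) * (fps_X^2 * fps_exp (a/n)) * (\<Sum>i<n. fps_exp (a/n) ^ (n - Suc i) * fps_exp (a/n) ^ i))"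
proof -
  have E: "fdom (fps_exp (a/n)) (fps_exp (a/n))" using assms by (intro fdom_exp) simp
  have "fdom ((Aser a n - fps_exp (a/n)) * (\<Sum>i<n. fps_exp (a/n) ^ (n - Suc i) * Aser a n ^ i))
           (fps_const (2*(a/n)^2) * (fps_X^2 * fps_exp (a/n)) * (\<Sum>i<n. fps_exp (a/n) ^ (n - Suc i) * fps_exp (a/n) ^ i))"
    by (intro fdom_mult AmE_dom[OF assms] fdom_sum fdom_power E A_dom[OF assms])
  then show ?thesis by (simp only: power_diff_sumr2)
qed

lemma sum_E:
  assumes "n \<ge> 1"
  shows "fps_const (2*(a/n)^2) * (fps_X^2 * fps_exp (a/n)) * (\<Sum>i<n. fps_exp (a/n) ^ (n - Suc i) * fps_exp (a/n) ^ i)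
     = fps_const (2*a^2/n) * (fps_X^2 * fps_exp a)"
proof -
  have "(\<Sum>i<n. fps_exp (a/n) ^ (n - Suc i) * fps_exp (a/n) ^ i) = (\<Sum>i<n. fps_exp (a/n) ^ (n - 1))"
    by (intro sum.cong refl) (simp add: power_add[symmetric])
  also have "\<dots> = fps_const (real n) * fps_exp (a/n) ^ (n - 1)"
    by (simp add: fps_of_nat[symmetric])
  finally have s: "(\<Sum>i<n. fps_exp (a/n) ^ (n - Suc i) * fps_exp (a/n) ^ i) = fps_const (real n) * fps_exp (a/n) ^ (n - 1)" .
  have e: "fps_exp (a/n) * fps_exp (a/n) ^ (n - 1) = fps_exp a"
  proof -
    have "fps_exp (a/n) * fps_exp (a/n) ^ (n - 1) = fps_exp (a/n) ^ n"
      using assms by (metis Suc_diff_1 less_le_trans zero_less_one power_Suc)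
    also have "real n * (a / real n) = a" using assms by simp
    then have "fps_exp (a/n) ^ n = fps_exp a" by (simp only: fps_exp_power_mult)
    finally show ?thesis .
  qed
  have c: "2*(a/n)^2 * real n = 2*a^2/n" using assms by (simp add: power2_eq_square)
  have "fps_const (2*(a/n)^2) * (fps_X^2 * fps_exp (a/n)) * (fps_const (real n) * fps_exp (a/n) ^ (n - 1))
      = fps_const (2*(a/n)^2 * real n) * (fps_X^2 * (fps_exp (a/n) * fps_exp (a/n) ^ (n - 1)))"
    by (simp only: fps_const_mult[symmetric] ac_simps)
  then show ?thesis unfolding s e c .
qed

lemma mom_diff_bound:
  assumes "a > 1" "n \<ge> 1"
  shows "\<bar>mom a k n / fact k - a^k / fact k\<bar> \<le> 2*a^2/n * (if k < 2 then 0 else a^(k-2) / fact (k-2))"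
proof -
  have h: "\<bar>(Aser a n ^ n - fps_exp (a/n) ^ n) $ k\<bar> \<le> (fps_const (2*a^2/n) * (fps_X^2 * fps_exp a)) $ k"
    using diff_dom[OF assms] unfolding sum_E[OF assms(2)] fdom_def by blast
  have e1: "fps_exp (a/n) ^ n = fps_exp a"
  proof -
    have "real n * (a / real n) = a" using assms by simp
    then show ?thesis by (simp only: fps_exp_power_mult)
  qed
  have e2: "(fps_const (2*a^2/n) * (fps_X^2 * fps_exp a)) $ k = 2*a^2/n * (if k < 2 then 0 else a^(k-2) / fact (k-2))"
    by (cases "k < 2") (simp_all add: fps_X_power_mult_nth)
  have e3: "(Aser a n ^ n - fps_exp a) $ k = mom a k n / fact k - a^k / fact k"
    by (simp only: fps_sub_nth mom_coeff[OF assms(2)] fps_exp_nth of_nat_fact)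
  show ?thesis using h unfolding e1 e2 e3 .
qed

lemma mom_lim:
  assumes "a > 1"
  shows "(\<lambda>n. mom a k n) \<longlonglongrightarrow> a^k"
proof -
  define c where "c = (if k < 2 then 0 else a^(k-2) / fact (k-2))"
  have "(\<lambda>n. mom a k n / fact k - a^k / fact k) \<longlonglongrightarrow> 0"
  proof (rule Lim_null_comparison)
    show "\<forall>\<^sub>F n in sequentially. norm (mom a k n / fact k - a^k / fact k) \<le> 2*a^2*c * (1 / real n)"
      using eventually_ge_at_top[of 1]
      by eventually_elim (use mom_diff_bound[OF assms] in \<open>auto simp: c_def\<close>)
    show "(\<lambda>n. 2*a^2*c * (1 / real n)) \<longlonglongrightarrow> 0"
      by (intro tendsto_mult_right_zero lim_1_over_n)
  qed
  then have "(\<lambda>n. (mom a k n / fact k - a^k / fact k) * fact k + a^k) \<longlonglongrightarrow> 0 * fact k + a^k"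
    by (intro tendsto_intros)
  then show ?thesis by (simp add: field_simps)
qed



definition Gser :: "real fps" where
  "Gser = Abs_fps (\<lambda>k. if even k then (-1/2)^(k div 2) / fact (k div 2) else 0)"

lemma Gser_sums: "(\<lambda>k. Gser $ k * x^k) sums exp (-(x^2)/2)"
proof -
  have "(\<lambda>m. (-(x^2)/2)^m /\<^sub>R fact m) sums exp (-(x^2)/2)" by (rule exp_converges)
  moreover have "(\<lambda>m. (-(x^2)/2)^m /\<^sub>R fact m) = (\<lambda>m. Gser $ (2*m) * x^(2*m))"
    apply (rule ext)
    apply (simp add: Gser_def power_mult_distrib power_mult field_simps power_minus')
    by (metis mult.commute power_mult)
  ultimately have "(\<lambda>m. Gser $ (2*m) * x^(2*m)) sums exp (-(x^2)/2)" by simp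
  then show ?thesis
    by (subst (asm) sums_mono_reindex[of "\<lambda>m. 2*m"])
       (auto simp: strict_mono_def Gser_def elim!: oddE)
qed

lemma Gser_radius: "fps_conv_radius Gser = \<infinity>"
  unfolding fps_conv_radius_def
  by (rule conv_radius_inftyI'') (use Gser_sums sums_summable in blast)

definition Fser :: "real \<Rightarrow> real fps" where
  "Fser l = fps_exp l * Gser"

lemma Fser_radius: "fps_conv_radius (Fser l) = \<infinity>"
proof -
  have "fps_conv_radius (Fser l) \<ge> min (fps_conv_radius (fps_exp l)) (fps_conv_radius Gser)"
    unfolding Fser_def by (rule fps_conv_radius_mult)
  then show ?thesis by (simp add: Gser_radius)
qed

lemma Fser_sums: "(\<lambda>k. Fser l $ k * x^k) sums exp (l * x - x^2/2)"
proof -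
  have "(\<lambda>k. Fser l $ k * x^k) sums eval_fps (Fser l) x"
    by (rule sums_eval_fps) (simp add: Fser_radius)
  also have "eval_fps (Fser l) x = exp (l * x) * eval_fps Gser x"
    unfolding Fser_def by (subst eval_fps_mult) (simp_all add: Gser_radius)
  also have "eval_fps Gser x = exp (-(x^2)/2)"
    unfolding eval_fps_def using Gser_sums sums_unique by metis
  also have "exp (l * x) * exp (-(x^2)/2) = exp (l * x - x^2/2)"
    by (simp add: exp_add[symmetric])
  finally show ?thesis .
qed

lemma main_lim:
  assumes "a > 1"
  shows "(\<lambda>n. \<Sum>j=0..n. Cj j n a * exp (l * (1 - 2 * real j / real n) - (1 - 2 * real j / real n)^2 / 2))
          \<longlonglongrightarrow> exp (- (a^2) / 2 + a * l)"
proof -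
  define aa where "aa = (\<lambda>k n. Fser l $ k * mom a k n)"
  define b where "b = (\<lambda>k. Fser l $ k * a^k)"
  have T: "eventually (\<lambda>n. summable (\<lambda>k. norm (aa k n))) sequentially \<and>
           summable (\<lambda>n. norm (b n)) \<and>
           ((\<lambda>n. suminf (\<lambda>k. aa k n)) \<longlongrightarrow> suminf b) sequentially"
  proof (rule tannerys_theorem)
    show "((\<lambda>n. aa k n) \<longlongrightarrow> b k) sequentially" for k
      unfolding aa_def b_def by (intro tendsto_intros mom_lim assms)
    show "eventually (\<lambda>(k,n). norm (aa k n) \<le> norm (b k)) (at_top \<times>\<^sub>F sequentially)"
      unfolding eventually_prod_filter
    proof (intro exI conjI allI impI)
      show "eventually (\<lambda>k. True) at_top" by simp
      show "eventually (\<lambda>n. n \<ge> 1) sequentially" by (rule eventually_ge_at_top)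
      fix k n :: nat assume "n \<ge> 1"
      then have "\<bar>mom a k n\<bar> \<le> \<bar>a^k\<bar>" using mom_bound[OF assms \<open>n \<ge> 1\<close>, of k] abs_ge_self[of "a^k"] by linarith
      then show "(\<lambda>(k,n). norm (aa k n) \<le> norm (b k)) (k, n)"
        unfolding aa_def b_def by (simp add: abs_mult mult_left_mono)
    qed
    show "summable (\<lambda>k. norm (b k))"
      unfolding b_def by (rule norm_summable_fps) (simp add: Fser_radius)
  qed simp
  have sb: "suminf b = exp (-(a^2)/2 + a * l)"
  proof -
    have "suminf b = exp (l * a - a^2/2)" unfolding b_def using Fser_sums sums_unique by metis
    then show ?thesis by (simp add: algebra_simps)
  qed
  have eq: "eventually (\<lambda>n. suminf (\<lambda>k. aa k n) =
     (\<Sum>j=0..n. Cj j n a * exp (l * (1 - 2 * real j / real n) - (1 - 2 * real j / real n)^2 / 2))) sequentially"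
    using eventually_ge_at_top[of 1]
  proof eventually_elim
    case (elim n)
    have "(\<Sum>j=0..n. Cj j n a * exp (l * (1 - 2 * real j / real n) - (1 - 2 * real j / real n)^2 / 2))
       = (\<Sum>j=0..n. Cj j n a * (\<Sum>k. Fser l $ k * (1 - 2 * real j / real n)^k))"
      by (intro sum.cong refl arg_cong[where f="\<lambda>t. Cj _ n a * t"] sums_unique Fser_sums)
    also have "\<dots> = (\<Sum>j=0..n. (\<Sum>k. Cj j n a * (Fser l $ k * (1 - 2 * real j / real n)^k)))"
      by (intro sum.cong refl suminf_mult[symmetric] sums_summable[OF Fser_sums])
    also have "\<dots> = (\<Sum>k. \<Sum>j=0..n. Cj j n a * (Fser l $ k * (1 - 2 * real j / real n)^k))"
      by (rule suminf_sum[symmetric]) (intro summable_mult sums_summable[OF Fser_sums])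
    also have "\<dots> = suminf (\<lambda>k. aa k n)"
      unfolding aa_def mom_def by (simp add: sum_distrib_left mult_ac)
    finally show ?case by simp
  qed
  from T have "(\<lambda>n. suminf (\<lambda>k. aa k n)) \<longlonglongrightarrow> exp (-(a^2)/2 + a * l)" unfolding sb by blast
  then show ?thesis by (rule Lim_transform_eventually[OF _ eq])
qed


theorem proposition5p2:
  fixes a :: real
  assumes "a > 1"
  shows "(\<forall>l::real. (\<lambda>n. \<Sum>j=0..n. Cj j n a *
            exp (l * (1 - 2 * real j / real n) - (1 - 2 * real j / real n)^2 / 2))
          \<longlonglongrightarrow> exp (- (a^2) / 2 + a * l)) \<and>
         (\<lambda>n. \<Sum>j=0..n. Cj j n a * exp (- ((1 - 2 * real j / real n)^2) / 2))
          \<longlonglongrightarrow> exp (- (a^2) / 2) \<and>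
         (\<lambda>n. \<Sum>j=0..n. Cj j n a *
            exp (a / 2 * (1 - 2 * real j / real n) - (1 - 2 * real j / real n)^2 / 2))
          \<longlonglongrightarrow> 1"
proof (intro conjI allI)
  show "(\<lambda>n. \<Sum>j=0..n. Cj j n a *
            exp (l * (1 - 2 * real j / real n) - (1 - 2 * real j / real n)^2 / 2))
          \<longlonglongrightarrow> exp (- (a^2) / 2 + a * l)" for l
    by (rule main_lim[OF assms])
  show "(\<lambda>n. \<Sum>j=0..n. Cj j n a * exp (- ((1 - 2 * real j / real n)^2) / 2))
          \<longlonglongrightarrow> exp (- (a^2) / 2)"
    using main_lim[OF assms, of 0] by simp
  have "- (a^2) / 2 + a * (a / 2) = 0" by (simp add: power2_eq_square)
  then show "(\<lambda>n. \<Sum>j=0..n. Cj j n a *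
            exp (a / 2 * (1 - 2 * real j / real n) - (1 - 2 * real j / real n)^2 / 2))
          \<longlonglongrightarrow> 1"
    using main_lim[OF assms, of "a/2"] by simp
qed

end
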